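(* Let $n\ge 2$ and let $C$ be a self-locating-dominating code in $P_n\square P_2$. Then $(v_1,1),(v_1,2),(v_n,1),(v_n,2)\in C$ and $|C|\ge n+1$.
   Context: $P_n$ is the path with vertex set $\{v_1,\dots,v_n\}$ and edges $v_iv_{i+1}$ ($1\le i\le n-1$); $P_2$ is the path on vertex set $\{1,2\}$. The Cartesian product $G\square H$ has vertex set $V(G)\times V(H)$, with $(u,v)$ adjacent to $(u',v')$ iff either $u=u'$ and $vv'\in E(H)$, or $uu'\in E(G)$ and $v=v'$. For a vertex $u$, $N[u]$ is its closed neighbourhood. A code is a non-empty subset $C$ of the vertex set $V$; $I(C;u)=N[u]\cap C$. A code $C$ is self-locating-dominating if for every $u\in V\setminus C$ we have $I(C;u)\neq\emptyset$ and $\bigcap_{c\in I(C;u)}N[c]=\{u\}$. *)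

theory Defs
  imports Main
begin

text \<open>The grid P_n box P_2: vertex (i,j) stands for (v_i, j), with 1 <= i <= n and j in {1,2}.\<close>

definition grid_vertices :: "nat \<Rightarrow> (nat \<times> nat) set" where
  "grid_vertices n = {1..n} \<times> {1..2}"

definition path_adj :: "nat \<Rightarrow> nat \<Rightarrow> bool" where
  "path_adj a b \<longleftrightarrow> a = b + 1 \<or> b = a + 1"

definition grid_adj :: "nat \<Rightarrow> nat \<times> nat \<Rightarrow> nat \<times> nat \<Rightarrow> bool" where
  "grid_adj n u w \<longleftrightarrow> u \<in> grid_vertices n \<and> w \<in> grid_vertices n \<and>
     ((fst u = fst w \<and> path_adj (snd u) (snd w)) \<or> (path_adj (fst u) (fst w) \<and> snd u = snd w))"

definition closed_nbhd :: "nat \<Rightarrow> nat \<times> nat \<Rightarrow> (nat \<times> nat) set" where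
  "closed_nbhd n u = {w \<in> grid_vertices n. w = u \<or> grid_adj n u w}"

definition I_set :: "nat \<Rightarrow> (nat \<times> nat) set \<Rightarrow> nat \<times> nat \<Rightarrow> (nat \<times> nat) set" where
  "I_set n C u = closed_nbhd n u \<inter> C"

definition self_locating_dominating :: "nat \<Rightarrow> (nat \<times> nat) set \<Rightarrow> bool" where
  "self_locating_dominating n C \<longleftrightarrow> C \<noteq> {} \<and> C \<subseteq> grid_vertices n \<and>
     (\<forall>u \<in> grid_vertices n - C. I_set n C u \<noteq> {} \<and>
        (\<Inter>c \<in> I_set n C u. closed_nbhd n c) = {u})"

end

theory Submission
  imports Defs
begin

lemma key_left:
  assumes sld: "self_locating_dominating n C" and u: "(i,j) \<in> grid_vertices n" and nu: "(i,j) \<notin> C"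
  shows "(i-1,j) \<in> C"
proof (rule ccontr)
  assume nl: "(i-1,j) \<notin> C"
  define j' where "j' = 3 - j"
  define w where "w = (if i < n then (i+1,j') else (i,j'))"
  have uj: "1 \<le> i" "i \<le> n" "j = 1 \<or> j = 2" using u by (auto simp: grid_vertices_def)
  have Cg: "C \<subseteq> grid_vertices n" using sld by (simp add: self_locating_dominating_def)
  have eq: "(\<Inter>c \<in> I_set n C (i,j). closed_nbhd n c) = {(i,j)}"
    using sld u nu by (simp add: self_locating_dominating_def)
  have "w \<in> (\<Inter>c \<in> I_set n C (i,j). closed_nbhd n c)"
  proof
    fix c assume c: "c \<in> I_set n C (i,j)"
    obtain a b where cab: "c = (a,b)" by fastforce
    have cC: "(a,b) \<in> C" and cN: "(a,b) \<in> closed_nbhd n (i,j)" using c cab by (auto simp: I_set_def)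
    have "(a,b) \<noteq> (i,j)" using cC nu by auto
    then have adj: "grid_adj n (i,j) (a,b)" using cN by (auto simp add: closed_nbhd_def)
    have ab: "(a = i \<and> b = j') \<or> (a = i + 1 \<and> b = j)"
      using adj nl cC uj unfolding grid_adj_def path_adj_def j'_def grid_vertices_def
      by (auto split: if_splits)
    show "w \<in> closed_nbhd n c"
      using ab uj adj cab unfolding w_def closed_nbhd_def grid_adj_def path_adj_def j'_def grid_vertices_def
      by auto
  qed
  with eq have "w = (i,j)" by auto
  then show False using uj unfolding w_def j'_def by (auto split: if_splits)
qed

lemma key_right:
  assumes sld: "self_locating_dominating n C" and u: "(i,j) \<in> grid_vertices n" and nu: "(i,j) \<notin> C"
  shows "(i+1,j) \<in> C"
proof (rule ccontr)
  assume nl: "(i+1,j) \<notin> C"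
  define j' where "j' = 3 - j"
  define w where "w = (if i > 1 then (i-1,j') else (i,j'))"
  have uj: "1 \<le> i" "i \<le> n" "j = 1 \<or> j = 2" using u by (auto simp: grid_vertices_def)
  have Cg: "C \<subseteq> grid_vertices n" using sld by (simp add: self_locating_dominating_def)
  have eq: "(\<Inter>c \<in> I_set n C (i,j). closed_nbhd n c) = {(i,j)}"
    using sld u nu by (simp add: self_locating_dominating_def)
  have "w \<in> (\<Inter>c \<in> I_set n C (i,j). closed_nbhd n c)"
  proof
    fix c assume c: "c \<in> I_set n C (i,j)"
    obtain a b where cab: "c = (a,b)" by fastforce
    have cC: "(a,b) \<in> C" and cN: "(a,b) \<in> closed_nbhd n (i,j)" using c cab by (auto simp: I_set_def)
    have "(a,b) \<in> grid_vertices n" using cC Cg by auto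
    have "(a,b) \<noteq> (i,j)" using cC nu by auto
    then have adj: "grid_adj n (i,j) (a,b)" using cN by (auto simp add: closed_nbhd_def)
    have ab: "(a = i \<and> b = j') \<or> (a + 1 = i \<and> b = j)"
      using adj nl cC uj unfolding grid_adj_def path_adj_def j'_def grid_vertices_def
      by (auto split: if_splits)
    show "w \<in> closed_nbhd n c"
      using ab uj adj cab unfolding w_def closed_nbhd_def grid_adj_def path_adj_def j'_def grid_vertices_def
      by auto
  qed
  with eq have "w = (i,j)" by auto
  then show False using uj unfolding w_def j'_def by (auto split: if_splits)
qed

lemma row_count:
  fixes S :: "nat set"
  assumes n: "n \<ge> 1" and sub: "S \<subseteq> {1..n}"
    and hP: "\<And>i. i \<in> {1..n} \<Longrightarrow> i \<notin> S \<Longrightarrow> i - 1 \<in> S \<and> i + 1 \<in> S"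
  shows "n + 1 \<le> 2 * card S"
proof -
  let ?T = "{1..n} - S"
  have one: "1 \<in> S" using hP[of 1] n sub by force
  have "Suc ` ?T \<subseteq> S - {1}" using hP by auto
  then have "card (Suc ` ?T) \<le> card (S - {1})"
    by (intro card_mono) (use sub finite_subset[OF sub] in auto)
  moreover have "card (Suc ` ?T) = card ?T" by (simp add: card_image)
  moreover have "card (S - {1}) = card S - 1" using one by simp
  moreover have "card ?T = n - card S" using sub by (simp add: card_Diff_subset finite_subset)
  moreover have "card S \<le> n" using sub by (metis card_atLeastAtMost card_mono diff_Suc_1 finite_atLeastAtMost)
  moreover have "card S \<ge> 1" using one sub by (metis One_nat_def Suc_leI card_gt_0_iff empty_iff finite_atLeastAtMost finite_subset)
  ultimately show ?thesis by linarith
qed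

theorem mainTheorem16:
  fixes n :: nat and C :: "(nat \<times> nat) set"
  assumes "n \<ge> 2" and "self_locating_dominating n C"
  shows "(1,1) \<in> C \<and> (1,2) \<in> C \<and> (n,1) \<in> C \<and> (n,2) \<in> C \<and> card C \<ge> n + 1"
proof -
  have Cg: "C \<subseteq> grid_vertices n" using assms by (simp add: self_locating_dominating_def)
  have fin: "finite C" using Cg by (rule finite_subset) (simp add: grid_vertices_def)
  have mem: "(i,j) \<in> C" if "i \<in> {1..n}" "j \<in> {1..2}" "(i,j) \<notin> C \<Longrightarrow> False" for i j
    using that by blast
  have L: "(i-1,j) \<in> C \<and> (i+1,j) \<in> C" if "(i,j) \<in> grid_vertices n" "(i,j) \<notin> C" for i j
    using key_left[OF assms(2) that] key_right[OF assms(2) that] by simp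
  have corner1: "(1,j) \<in> C" if "j \<in> {1..2}" for j
  proof (rule ccontr)
    assume "(1,j) \<notin> C"
    with L[of 1 j] that assms(1) have "(0,j) \<in> C" by (auto simp: grid_vertices_def)
    with Cg show False by (auto simp: grid_vertices_def)
  qed
  have corner2: "(n,j) \<in> C" if "j \<in> {1..2}" for j
  proof (rule ccontr)
    assume "(n,j) \<notin> C"
    with L[of n j] that assms(1) have "(n+1,j) \<in> C" by (auto simp: grid_vertices_def)
    with Cg show False by (auto simp: grid_vertices_def)
  qed
  define S where "S j = {i. (i,j) \<in> C}" for j
  have rowS: "n + 1 \<le> 2 * card (S j)" if "j \<in> {1..2}" for j
  proof (rule row_count)
    show "1 \<le> n" using assms by simp
    show "S j \<subseteq> {1..n}" using Cg by (auto simp: S_def grid_vertices_def)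
    fix i assume "i \<in> {1..n}" "i \<notin> S j"
    then show "i - 1 \<in> S j \<and> i + 1 \<in> S j" using L[of i j] that by (auto simp: S_def grid_vertices_def)
  qed
  have img: "(\<lambda>i. (i,j)) ` S j \<subseteq> C" for j by (auto simp: S_def)
  have "card ((\<lambda>i. (i,1::nat)) ` S 1 \<union> (\<lambda>i. (i,2)) ` S 2) \<le> card C"
    using img fin by (intro card_mono) auto
  moreover have "card ((\<lambda>i. (i,1::nat)) ` S 1 \<union> (\<lambda>i. (i,2)) ` S 2) = card (S 1) + card (S 2)"
  proof -
    have f: "finite (S j)" for j
      by (rule finite_subset[of _ "fst ` C"]) (use fin in \<open>force simp: S_def image_iff\<close>)+
    have "card ((\<lambda>i. (i,1::nat)) ` S 1 \<union> (\<lambda>i. (i,2)) ` S 2) = card ((\<lambda>i. (i,1::nat)) ` S 1) + card ((\<lambda>i. (i,2::nat)) ` S 2)"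
      by (rule card_Un_disjoint) (use f in auto)
    also have "\<dots> = card (S 1) + card (S 2)" by (simp add: card_image inj_on_def)
    finally show ?thesis .
  qed
  moreover have "n + 1 \<le> 2 * card (S 1)" "n + 1 \<le> 2 * card (S 2)" using rowS by auto
  ultimately have "n + 1 \<le> card C" by linarith
  then show ?thesis using corner1 corner2 by auto
qed

end
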